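(* Let $a$ and $m$ be coprime positive integers. Then for all complex $s$ with ${\rm Re}(s)>1$, \[ m^s\,\Phi(s,a/m)=\sum_{d\mid m}\frac{d^s}{\varphi(d)}\sum_{\chi\in\hat{U}_d} \chi(a)\,\tau(\overline{\chi})\,L(s,\chi). \]
   Context: For real $\beta$ and ${\rm Re}(s)>1$, $\Phi(s,\beta)=\sum_{n=1}^\infty e^{2\pi i\beta n}n^{-s}$ (periodic zeta function). For a positive integer $d$, $\hat U_d$ is the group of Dirichlet characters of modulus $d$ (not necessarily primitive), $L(s,\chi)=\sum_{n\ge1}\chi(n)n^{-s}$, and $\tau(\chi)=\sum_{\nu\bmod d}\chi(\nu)e^{2\pi i\nu/d}$ is the Gauss sum computed with respect to the modulus $d$; $\overline\chi$ is the complex conjugate character; $\varphi$ is Euler's totient function. *)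

theory Defs
  imports "HOL-Analysis.Analysis" "HOL-Number_Theory.Number_Theory"
begin

definition periodic_zeta :: "complex \<Rightarrow> real \<Rightarrow> complex" where
  "periodic_zeta s \<beta> =
     (\<Sum>n. exp (2 * of_real pi * \<i> * of_real \<beta> * of_nat (Suc n)) / of_nat (Suc n) powr s)"

definition dirichlet_char :: "nat \<Rightarrow> (nat \<Rightarrow> complex) \<Rightarrow> bool" where
  "dirichlet_char d chi \<longleftrightarrow>
     (\<forall>n. chi (n + d) = chi n) \<and>
     (\<forall>m n. chi (m * n) = chi m * chi n) \<and>
     (\<forall>n. chi n \<noteq> 0 \<longleftrightarrow> coprime n d)"

definition dchars :: "nat \<Rightarrow> (nat \<Rightarrow> complex) set" where
  "dchars d = {chi. dirichlet_char d chi}"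

definition dirichlet_L :: "complex \<Rightarrow> (nat \<Rightarrow> complex) \<Rightarrow> complex" where
  "dirichlet_L s chi = (\<Sum>n. chi (Suc n) / of_nat (Suc n) powr s)"

definition gauss_sum :: "nat \<Rightarrow> (nat \<Rightarrow> complex) \<Rightarrow> complex" where
  "gauss_sum d chi = (\<Sum>\<nu><d. chi \<nu> * exp (2 * of_real pi * \<i> * of_nat \<nu> / of_nat d))"

end

theory Submission
  imports Defs
begin

context comm_group
begin

lemma char_ext_step:
  fixes \<psi> :: "'a \<Rightarrow> complex"
  assumes fin: "finite (carrier G)" and H: "subgroup H G"
    and psi1: "\<psi> \<one> = 1" and psim: "\<And>x y. x \<in> H \<Longrightarrow> y \<in> H \<Longrightarrow> \<psi> (x \<otimes> y) = \<psi> x * \<psi> y"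
    and g: "g \<in> carrier G" "g \<notin> H"
  shows "\<exists>r>0. g [^] r \<in> H \<and> (\<forall>w. w ^ r = \<psi> (g [^] r) \<longrightarrow>
     (\<exists>H' chi. subgroup H' G \<and> H \<subset> H' \<and> chi \<one> = 1 \<and>
        (\<forall>x\<in>H'. \<forall>y\<in>H'. chi (x \<otimes> y) = chi x * chi y) \<and> (\<forall>x\<in>H. chi x = \<psi> x) \<and> chi g = w \<and> g \<in> H'))"
proof -
  interpret H: subgroup H G by (rule H)
  define r :: nat where "r = (LEAST j. 0 < j \<and> g [^] j \<in> H)"
  have ex: "0 < ord g \<and> g [^] ord g \<in> H"
    using ord_ge_1[OF fin g(1)] g by simp
  have r: "0 < r \<and> g [^] r \<in> H"
    unfolding r_def by (rule LeastI[of _ "ord g"]) (use ex in simp)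
  have rmin: "\<not> (0 < j \<and> g [^] j \<in> H)" if "j < r" for j
    using not_less_Least[of j "\<lambda>j. 0 < j \<and> g [^] j \<in> H"] that unfolding r_def by blast
  have powH: "x [^] (n::nat) \<in> H" if "x \<in> H" for x n
    by (induction n) (use that in auto)
  have psipow: "\<psi> (x [^] (n::nat)) = \<psi> x ^ n" if "x \<in> H" for x n
  proof (induction n)
    case 0 then show ?case using psi1 by simp
  next
    case (Suc n)
    have "x [^] Suc n = x [^] n \<otimes> x" using that H.subset by (simp add: nat_pow_Suc)
    then show ?case using Suc psim[of "x [^] n" x] powH[OF that] that by simp
  qed
  have rdvd: "r dvd j" if "g [^] j \<in> H" for j
  proof -
    define q t where "q = j div r" and "t = j mod r"
    have j: "j = r * q + t" unfolding q_def t_def by simp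
    have "g [^] j = g [^] (r * q) \<otimes> g [^] t" using g by (simp add: j nat_pow_mult)
    hence "g [^] t = inv (g [^] (r * q)) \<otimes> g [^] j"
      using g by (simp add: inv_solve_left)
    moreover have "g [^] (r * q) \<in> H" using powH[of "g [^] r" q] r g by (simp add: nat_pow_pow)
    ultimately have "g [^] t \<in> H" using that by simp
    moreover have "t < r" using r unfolding t_def by simp
    ultimately have "t = 0" using rmin[of t] by simp
    thus ?thesis using t_def by (simp add: dvd_eq_mod_eq_0)
  qed
  show ?thesis
  proof (intro exI[of _ r] conjI allI impI)
    show "0 < r" "g [^] r \<in> H" using r by auto
    fix w :: complex assume w: "w ^ r = \<psi> (g [^] r)"
    define H' where "H' = {h \<otimes> g [^] (j::nat) | h j. h \<in> H}"
    have wd: "\<psi> h1 * w ^ j1 = \<psi> h2 * w ^ j2"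
      if h: "h1 \<in> H" "h2 \<in> H" and eq: "h1 \<otimes> g [^] j1 = h2 \<otimes> g [^] (j2::nat)" and le: "j1 \<le> j2"
      for h1 h2 j1 j2
    proof -
      have c: "h1 \<in> carrier G" "h2 \<in> carrier G" using h H.subset by auto
      have "g [^] j2 = g [^] (j2 - j1) \<otimes> g [^] j1" using g le by (simp add: nat_pow_mult)
      hence "h1 \<otimes> g [^] j1 = (h2 \<otimes> g [^] (j2 - j1)) \<otimes> g [^] j1"
        using eq c g by (simp add: m_assoc)
      hence h1: "h1 = h2 \<otimes> g [^] (j2 - j1)"
        using c g by (metis m_closed nat_pow_closed right_cancel)
      hence "g [^] (j2 - j1) = inv h2 \<otimes> h1" using c g by (simp add: inv_solve_left)
      hence "g [^] (j2 - j1) \<in> H" using h by simp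
      then obtain q where q: "j2 - j1 = r * q" using rdvd by (meson dvdE)
      have gq: "g [^] (j2 - j1) = (g [^] r) [^] q" using g by (simp add: q nat_pow_pow)
      have "\<psi> h1 = \<psi> h2 * \<psi> ((g [^] r) [^] q)"
        using h1 gq psim[of h2 "(g [^] r) [^] q"] h powH r by simp
      also have "\<dots> = \<psi> h2 * w ^ (j2 - j1)" using psipow[of "g [^] r" q] r w
        by (simp add: q power_mult)
      finally have "\<psi> h1 * w ^ j1 = \<psi> h2 * (w ^ (j2 - j1) * w ^ j1)" by simp
      also have "\<dots> = \<psi> h2 * w ^ j2" using le by (simp flip: power_add)
      finally show ?thesis .
    qed
    have wd2: "\<psi> h1 * w ^ j1 = \<psi> h2 * w ^ j2"
      if h: "h1 \<in> H" "h2 \<in> H" and eq: "h1 \<otimes> g [^] j1 = h2 \<otimes> g [^] (j2::nat)" for h1 h2 j1 j2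
      using wd[OF h eq] wd[OF h(2,1) eq[symmetric]] by (cases "j1 \<le> j2") auto
    define chi where "chi y = (THE v. \<exists>h\<in>H. \<exists>j. y = h \<otimes> g [^] j \<and> v = \<psi> h * w ^ j)" for y
    have chi: "chi (h \<otimes> g [^] j) = \<psi> h * w ^ j" if "h \<in> H" for h j
      unfolding chi_def
    proof (rule the_equality)
      show "\<exists>h'\<in>H. \<exists>j'. h \<otimes> g [^] j = h' \<otimes> g [^] j' \<and> \<psi> h * w ^ j = \<psi> h' * w ^ j'"
        using that by blast
      fix v assume "\<exists>h'\<in>H. \<exists>j'. h \<otimes> g [^] j = h' \<otimes> g [^] j' \<and> v = \<psi> h' * w ^ j'"
      then obtain h' j' where "h' \<in> H" "h \<otimes> g [^] j = h' \<otimes> g [^] j'" "v = \<psi> h' * w ^ j'" by blast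
      thus "v = \<psi> h * w ^ j" using wd2[of h h' j j'] that by simp
    qed
    have mulH': "x \<otimes> y \<in> H'" if xy: "x \<in> H'" "y \<in> H'" for x y
    proof -
      obtain h1 and j1 :: nat where 1: "x = h1 \<otimes> g [^] j1" "h1 \<in> H" using xy unfolding H'_def by blast
      obtain h2 and j2 :: nat where 2: "y = h2 \<otimes> g [^] j2" "h2 \<in> H" using xy unfolding H'_def by blast
      have c: "h1 \<in> carrier G" "h2 \<in> carrier G" using 1 2 H.subset by auto
      have "x \<otimes> y = (h1 \<otimes> h2) \<otimes> g [^] (j1 + j2)"
        using 1 2 c g by (simp add: nat_pow_mult m_ac)
      thus ?thesis using 1 2 unfolding H'_def by blast
    qed
    have chim: "chi (x \<otimes> y) = chi x * chi y" if xy: "x \<in> H'" "y \<in> H'" for x y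
    proof -
      obtain h1 and j1 :: nat where 1: "x = h1 \<otimes> g [^] j1" "h1 \<in> H" using xy unfolding H'_def by blast
      obtain h2 and j2 :: nat where 2: "y = h2 \<otimes> g [^] j2" "h2 \<in> H" using xy unfolding H'_def by blast
      have c: "h1 \<in> carrier G" "h2 \<in> carrier G" using 1 2 H.subset by auto
      have "x \<otimes> y = (h1 \<otimes> h2) \<otimes> g [^] (j1 + j2)"
        using 1 2 c g by (simp add: nat_pow_mult m_ac)
      hence "chi (x \<otimes> y) = \<psi> (h1 \<otimes> h2) * w ^ (j1 + j2)" using chi 1 2 by simp
      also have "\<dots> = (\<psi> h1 * w ^ j1) * (\<psi> h2 * w ^ j2)" using psim 1 2 by (simp add: power_add)
      finally show ?thesis using chi 1 2 by simp
    qed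
    have H'sub: "H' \<subseteq> carrier G" unfolding H'_def using H.subset g by auto
    have inH': "h \<in> H'" if "h \<in> H" for h
      unfolding H'_def using that H.subset by (intro CollectI exI[of _ h] exI[of _ 0]) auto
    have gH': "g \<in> H'"
      unfolding H'_def using g by (intro CollectI exI[of _ \<one>] exI[of _ 1]) auto
    have "subgroup H' G"
    proof
      show "H' \<subseteq> carrier G" by (rule H'sub)
      show "x \<otimes> y \<in> H'" if "x \<in> H'" "y \<in> H'" for x y using mulH' that .
      show "\<one> \<in> H'" using inH' by simp
      show "inv x \<in> H'" if x: "x \<in> H'" for x
      proof -
        obtain h and j :: nat where 1: "x = h \<otimes> g [^] j" "h \<in> H" using x unfolding H'_def by blast
        have c: "h \<in> carrier G" using 1 H.subset by auto
        have "g [^] (j * (ord g - 1)) \<otimes> g [^] j = g [^] (j * ord g)"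
          using g ord_ge_1[OF fin g(1)] by (simp add: nat_pow_mult algebra_simps)
        also have "\<dots> = \<one>" using g by (metis mult.commute nat_pow_one nat_pow_pow pow_ord_eq_1)
        finally have "inv (g [^] j) = g [^] (j * (ord g - 1))"
          using g by (intro inv_equality) auto
        hence "inv x = inv h \<otimes> g [^] (j * (ord g - 1))"
          using 1 c g by (simp add: inv_mult)
        thus ?thesis unfolding H'_def using 1 by blast
      qed
    qed
    moreover have "H \<subset> H'" using inH' gH' g by blast
    moreover have "chi \<one> = 1" using chi[of \<one> 0] psi1 by simp
    moreover have "\<forall>x\<in>H. chi x = \<psi> x" using chi[of _ 0] H.subset by auto
    moreover have "chi g = w" using chi[of \<one> 1] psi1 g by simp
    ultimately show "\<exists>H' chi. subgroup H' G \<and> H \<subset> H' \<and> chi \<one> = 1 \<and>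
        (\<forall>x\<in>H'. \<forall>y\<in>H'. chi (x \<otimes> y) = chi x * chi y) \<and> (\<forall>x\<in>H. chi x = \<psi> x) \<and> chi g = w \<and> g \<in> H'"
      using chim gH' by blast
  qed
qed

end

lemma complex_root_exists: "\<exists>w::complex. w ^ r = c" if "r > 0"
proof (cases "c = 0")
  case True thus ?thesis using that by (intro exI[of _ 0]) simp
next
  case False
  have e: "of_nat r * (Ln c / of_nat r) = Ln c" using that by simp
  have "exp (Ln c / of_nat r) ^ r = exp (of_nat r * (Ln c / of_nat r))" by (rule exp_of_nat_mult[symmetric])
  also have "\<dots> = exp (Ln c)" by (simp only: e)
  also have "\<dots> = c" using False by simp
  finally show ?thesis by blast
qed

context comm_group
begin

lemma char_ext_full:
  fixes \<psi> :: "'a \<Rightarrow> complex"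
  assumes fin: "finite (carrier G)" and H: "subgroup H G"
    and psi1: "\<psi> \<one> = 1" and psim: "\<forall>x\<in>H. \<forall>y\<in>H. \<psi> (x \<otimes> y) = \<psi> x * \<psi> y"
  shows "\<exists>chi. chi \<one> = 1 \<and> (\<forall>x\<in>carrier G. \<forall>y\<in>carrier G. chi (x \<otimes> y) = chi x * chi y)
             \<and> (\<forall>x\<in>H. chi x = \<psi> x)"
  using H psi1 psim
proof (induction "card (carrier G) - card H" arbitrary: H \<psi> rule: less_induct)
  case less
  interpret H: subgroup H G by (rule less.prems(1))
  show ?case
  proof (cases "H = carrier G")
    case True
    show ?thesis by (rule exI[of _ \<psi>]) (use less.prems True in simp)
  next
    case False
    then obtain g where g: "g \<in> carrier G" "g \<notin> H" using H.subset by blast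
    have psim': "\<And>x y. x \<in> H \<Longrightarrow> y \<in> H \<Longrightarrow> \<psi> (x \<otimes> y) = \<psi> x * \<psi> y"
      using less.prems(3) by blast
    obtain r where r0: "r > 0 \<and> g [^] r \<in> H \<and> (\<forall>w. w ^ r = \<psi> (g [^] r) \<longrightarrow>
     (\<exists>H' chi. subgroup H' G \<and> H \<subset> H' \<and> chi \<one> = 1 \<and>
        (\<forall>x\<in>H'. \<forall>y\<in>H'. chi (x \<otimes> y) = chi x * chi y) \<and> (\<forall>x\<in>H. chi x = \<psi> x) \<and> chi g = w \<and> g \<in> H'))"
      using char_ext_step[OF fin less.prems(1) less.prems(2) psim' g] by (rule exE)
    have r: "r > 0" "g [^] r \<in> H" using r0 by simp_all
    have ext: "\<forall>w. w ^ r = \<psi> (g [^] r) \<longrightarrow>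
     (\<exists>H' chi. subgroup H' G \<and> H \<subset> H' \<and> chi \<one> = 1 \<and>
        (\<forall>x\<in>H'. \<forall>y\<in>H'. chi (x \<otimes> y) = chi x * chi y) \<and> (\<forall>x\<in>H. chi x = \<psi> x) \<and> chi g = w \<and> g \<in> H')"
      using r0 by (rule conjunct2[THEN conjunct2])
    obtain w where "w ^ r = \<psi> (g [^] r)" using complex_root_exists[OF r(1)] by blast
    from ext[rule_format, OF this] obtain H' chi where H': "subgroup H' G" "H \<subset> H'" "chi \<one> = 1"
      "\<forall>x\<in>H'. \<forall>y\<in>H'. chi (x \<otimes> y) = chi x * chi y" "\<forall>x\<in>H. chi x = \<psi> x" by blast
    have "H' \<subseteq> carrier G" using H'(1) subgroup.subset by blast
    hence "card H < card H'" "card H' \<le> card (carrier G)"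
      using psubset_card_mono[OF finite_subset[OF \<open>H' \<subseteq> carrier G\<close> fin] H'(2)] card_mono[OF fin]
      by simp_all
    hence "card (carrier G) - card H' < card (carrier G) - card H" by linarith
    from less.hyps[OF this H'(1) H'(3) H'(4)] obtain chi' where
      c1: "chi' \<one> = 1" and c2: "\<forall>x\<in>carrier G. \<forall>y\<in>carrier G. chi' (x \<otimes> y) = chi' x * chi' y"
      and c3: "\<forall>x\<in>H'. chi' x = chi x" by blast
    have "H \<subseteq> H'" using H'(2) by (rule psubset_imp_subset)
    hence c4: "\<forall>x\<in>H. chi' x = \<psi> x" using c3 H'(5) by auto
    show ?thesis by (rule exI[of _ chi'], intro conjI c1 c2 c4)
  qed
qed

lemma char_sep:
  assumes fin: "finite (carrier G)" and x: "x \<in> carrier G" "x \<noteq> \<one>"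
  shows "\<exists>chi::'a \<Rightarrow> complex. chi \<one> = 1 \<and>
     (\<forall>x\<in>carrier G. \<forall>y\<in>carrier G. chi (x \<otimes> y) = chi x * chi y) \<and> chi x \<noteq> 1"
proof -
  have xn: "x \<notin> {\<one>}" using x by simp
  have p1: "(\<lambda>_::'a. 1::complex) \<one> = 1" by simp
  have p2: "\<And>a b. a \<in> {\<one>} \<Longrightarrow> b \<in> {\<one>} \<Longrightarrow> (\<lambda>_::'a. 1::complex) (a \<otimes> b) = (\<lambda>_::'a. 1::complex) a * (\<lambda>_::'a. 1::complex) b"
    by simp
  obtain r where r0: "r > 0 \<and> x [^] r \<in> {\<one>} \<and> (\<forall>w. w ^ r = (1::complex) \<longrightarrow>
     (\<exists>H' chi. subgroup H' G \<and> {\<one>} \<subset> H' \<and> chi \<one> = 1 \<and>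
        (\<forall>x\<in>H'. \<forall>y\<in>H'. chi (x \<otimes> y) = chi x * chi y) \<and> (\<forall>y\<in>{\<one>}. chi y = 1) \<and> chi x = w \<and> x \<in> H'))"
    using char_ext_step[OF fin triv_subgroup p1 p2 x(1) xn] by (rule exE)
  have r: "r > 0" "x [^] r \<in> {\<one>}" using r0 by simp_all
  have ext: "\<forall>w. w ^ r = (1::complex) \<longrightarrow>
     (\<exists>H' chi. subgroup H' G \<and> {\<one>} \<subset> H' \<and> chi \<one> = 1 \<and>
        (\<forall>x\<in>H'. \<forall>y\<in>H'. chi (x \<otimes> y) = chi x * chi y) \<and> (\<forall>y\<in>{\<one>}. chi y = 1) \<and> chi x = w \<and> x \<in> H')"
    using r0 by (rule conjunct2[THEN conjunct2])
  have "r \<noteq> 1" using r x by auto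
  hence "card {z::complex. z ^ r = 1} \<ge> 2" using r card_roots_unity_eq[of r] by simp
  have "\<exists>w::complex. w ^ r = 1 \<and> w \<noteq> 1"
  proof (rule ccontr)
    assume "\<not> (\<exists>w::complex. w ^ r = 1 \<and> w \<noteq> 1)"
    hence "{z::complex. z ^ r = 1} \<subseteq> {1}" by blast
    hence "card {z::complex. z ^ r = 1} \<le> card {1::complex}" by (intro card_mono) auto
    with \<open>card _ \<ge> 2\<close> show False by simp
  qed
  then obtain w :: complex where w: "w ^ r = 1" "w \<noteq> 1" by blast
  from ext[rule_format, OF w(1)] obtain H' chi where H': "subgroup H' G" "chi \<one> = 1"
      "\<forall>x\<in>H'. \<forall>y\<in>H'. chi (x \<otimes> y) = chi x * chi y" "chi x = w" "x \<in> H'" by blast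
  from char_ext_full[OF fin H'(1) H'(2) H'(3)] obtain chi' where
    c1: "chi' \<one> = 1" and c2: "\<forall>x\<in>carrier G. \<forall>y\<in>carrier G. chi' (x \<otimes> y) = chi' x * chi' y"
    and c3: "\<forall>y\<in>H'. chi' y = chi y" by blast
  have c4: "chi' x \<noteq> 1" using c3 H'(4,5) w(2) by simp
  show ?thesis by (rule exI[of _ chi'], intro conjI c1 c2 c4)
qed

end

lemma dchar_periodic:
  assumes "dirichlet_char d chi"
  shows "chi (x + k * d) = chi x"
proof (induction k)
  case (Suc k)
  have "chi (x + Suc k * d) = chi ((x + k * d) + d)" by (simp add: algebra_simps)
  also have "\<dots> = chi (x + k * d)" using assms unfolding dirichlet_char_def by blast
  finally show ?case using Suc by simp
qed simp

lemma dchar_mod: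
  assumes "dirichlet_char d chi"
  shows "chi n = chi (n mod d)"
  using dchar_periodic[OF assms, of "n mod d" "n div d"] by simp

lemma dchar_mult:
  assumes "dirichlet_char d chi"
  shows "chi (m * n) = chi m * chi n"
  using assms unfolding dirichlet_char_def by blast

lemma dchar_nz_iff:
  assumes "dirichlet_char d chi"
  shows "chi n \<noteq> 0 \<longleftrightarrow> coprime n d"
  using assms unfolding dirichlet_char_def by blast

lemma dchar_zero:
  assumes "dirichlet_char d chi" "\<not> coprime n d"
  shows "chi n = 0"
  using dchar_nz_iff[OF assms(1)] assms(2) by blast

lemma dchar_one:
  assumes "dirichlet_char d chi"
  shows "chi 1 = 1"
proof -
  have nz: "chi 1 \<noteq> 0" using dchar_nz_iff[OF assms, of 1] by simp
  have h: "chi 1 = chi 1 * chi 1" using dchar_mult[OF assms, of 1 1] by simp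
  have "chi 1 * (chi 1 - 1) = 0" using h by (simp add: algebra_simps)
  thus ?thesis using nz by (metis eq_iff_diff_eq_0 mult_eq_0_iff)
qed

lemma dchar_pow:
  assumes "dirichlet_char d chi"
  shows "chi (n ^ k) = chi n ^ k"
proof -
  have o: "chi (Suc 0) = 1" using dchar_one[OF assms] by simp
  show ?thesis by (induction k) (simp_all add: o dchar_mult[OF assms])
qed

lemma dchar_cong:
  assumes "dirichlet_char d chi" "[a = b] (mod d)"
  shows "chi a = chi b"
  using assms dchar_mod[OF assms(1)] unfolding cong_def by metis

lemma dchar_pow_totient:
  assumes "dirichlet_char d chi" "coprime n d"
  shows "chi n ^ totient d = 1"
proof -
  have "chi n ^ totient d = chi (n ^ totient d)" by (simp add: dchar_pow[OF assms(1)])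
  also have "\<dots> = chi 1" by (rule dchar_cong[OF assms(1) euler_theorem[OF assms(2)]])
  finally show ?thesis using dchar_one[OF assms(1)] by simp
qed

lemma dchar_norm:
  assumes "dirichlet_char d chi" "coprime n d" "d > 0"
  shows "norm (chi n) = 1"
proof -
  have "totient d > 0" using assms(3) by simp
  thus ?thesis using power_eq_1_iff[OF dchar_pow_totient[OF assms(1,2)]] by simp
qed

lemma dchar_cnj_mult:
  assumes "dirichlet_char d chi" "coprime n d" "d > 0"
  shows "chi n * cnj (chi n) = 1"
  using dchar_norm[OF assms] by (metis complex_norm_square of_real_1 power_one)

lemma dchars_finite:
  assumes "d > 0"
  shows "finite (dchars d)"
proof -
  define S where "S = insert 0 {z::complex. z ^ totient d = 1}"
  have "totient d \<ge> 1" using assms by (simp add: Suc_le_eq)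
  hence finS: "finite S" unfolding S_def by (simp add: finite_roots_unity)
  have inj: "inj_on (\<lambda>chi. restrict chi {..<d}) (dchars d)"
  proof (rule inj_onI)
    fix c1 c2 assume c: "c1 \<in> dchars d" "c2 \<in> dchars d"
      and eq: "restrict c1 {..<d} = restrict c2 {..<d}"
    show "c1 = c2"
    proof
      fix n
      have "n mod d < d" using assms by simp
      hence "c1 (n mod d) = c2 (n mod d)" using fun_cong[OF eq, of "n mod d"] by simp
      moreover have "dirichlet_char d c1" "dirichlet_char d c2" using c unfolding dchars_def by auto
      ultimately show "c1 n = c2 n" using dchar_mod[of d c1 n] dchar_mod[of d c2 n] by simp
    qed
  qed
  have "(\<lambda>chi. restrict chi {..<d}) ` dchars d \<subseteq> PiE {..<d} (\<lambda>_. S)"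
  proof
    fix f assume "f \<in> (\<lambda>chi. restrict chi {..<d}) ` dchars d"
    then obtain chi where chi0: "chi \<in> dchars d" and f: "f = restrict chi {..<d}" by (rule imageE)
    have chi: "dirichlet_char d chi" using chi0 unfolding dchars_def by simp
    have "chi n \<in> S" for n
      by (cases "coprime n d") (simp_all add: S_def dchar_pow_totient[OF chi] dchar_zero[OF chi])
    thus "f \<in> PiE {..<d} (\<lambda>_. S)" unfolding f by auto
  qed
  hence "finite ((\<lambda>chi. restrict chi {..<d}) ` dchars d)"
    by (rule finite_subset) (use finS in \<open>simp add: finite_PiE\<close>)
  thus ?thesis using finite_imageD inj by auto
qed

lemma dchars_exists:
  assumes d: "d > 1" and x: "coprime x d" "x mod d \<noteq> 1"
  shows "\<exists>chi\<in>dchars d. chi x \<noteq> 1"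
proof -
  define R where "R = residue_ring (int d)"
  interpret residues "int d" R
    by unfold_locales (use d in \<open>simp_all add: R_def\<close>)
  define G where "G = units_of R"
  interpret G: comm_group G unfolding G_def by (rule units_comm_group)
  have carr: "carrier G = {x. 0 < x \<and> x < int d \<and> coprime x (int d)}"
    unfolding G_def units_of_carrier by (rule res_units_eq)
  have fin: "finite (carrier G)" unfolding carr by (rule finite_subset[of _ "{0..<int d}"]) auto
  have mul: "a \<otimes>\<^bsub>G\<^esub> b = (a * b) mod int d" for a b
    unfolding G_def units_of_mult by (rule res_mult_eq)
  have one: "\<one>\<^bsub>G\<^esub> = 1" unfolding G_def units_of_one by (rule res_one_eq)
  have inG: "int n mod int d \<in> carrier G" if "coprime n d" for n
  proof -
    have cop: "coprime (int n mod int d) (int d)" using that d by simp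
    moreover have "int n mod int d \<noteq> 0"
    proof
      assume "int n mod int d = 0"
      hence "coprime (int d) (int d)" using cop by simp
      thus False using d by simp
    qed
    moreover have "int n mod int d \<ge> 0" "int n mod int d < int d" using d by simp_all
    ultimately show ?thesis unfolding carr by simp
  qed
  have u1: "int x mod int d \<noteq> \<one>\<^bsub>G\<^esub>"
  proof
    assume "int x mod int d = \<one>\<^bsub>G\<^esub>"
    hence "int (x mod d) = int 1" unfolding one by (simp add: zmod_int)
    thus False using x by simp
  qed
  obtain psi :: "int \<Rightarrow> complex" where psi0: "psi \<one>\<^bsub>G\<^esub> = 1 \<and>
    (\<forall>a\<in>carrier G. \<forall>b\<in>carrier G. psi (a \<otimes>\<^bsub>G\<^esub> b) = psi a * psi b) \<and>
    psi (int x mod int d) \<noteq> 1"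
    using G.char_sep[OF fin inG[OF x(1)] u1] by (rule exE)
  have psi1: "psi \<one>\<^bsub>G\<^esub> = 1" using psi0 by (rule conjunct1)
  have psi2: "\<forall>a\<in>carrier G. \<forall>b\<in>carrier G. psi (a \<otimes>\<^bsub>G\<^esub> b) = psi a * psi b"
    using psi0 by (rule conjunct2[THEN conjunct1])
  have psi3: "psi (int x mod int d) \<noteq> 1" using psi0 by (rule conjunct2[THEN conjunct2])
  have psinz: "psi a \<noteq> 0" if "a \<in> carrier G" for a
  proof
    assume a0: "psi a = 0"
    have ia: "inv\<^bsub>G\<^esub> a \<in> carrier G" using that by simp
    have "psi (a \<otimes>\<^bsub>G\<^esub> inv\<^bsub>G\<^esub> a) = psi a * psi (inv\<^bsub>G\<^esub> a)"
      using psi2 that ia by blast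
    also have "\<dots> = 0" using a0 by simp
    also have "a \<otimes>\<^bsub>G\<^esub> inv\<^bsub>G\<^esub> a = \<one>\<^bsub>G\<^esub>" using that by simp
    finally show False using psi1 by simp
  qed
  define chi where "chi n = (if coprime n d then psi (int n mod int d) else 0)" for n
  have "dirichlet_char d chi"
    unfolding dirichlet_char_def
  proof (intro conjI allI)
    fix n
    have "coprime (n + d) d \<longleftrightarrow> coprime n d"
      using coprime_mod_left_iff[of d "n + d"] coprime_mod_left_iff[of d n] d by simp
    thus "chi (n + d) = chi n" unfolding chi_def by simp
    show "chi n \<noteq> 0 \<longleftrightarrow> coprime n d" unfolding chi_def using psinz inG by simp
  next
    fix m n
    show "chi (m * n) = chi m * chi n"
    proof (cases "coprime m d \<and> coprime n d")
      case True
      have um: "int m mod int d \<in> carrier G" "int n mod int d \<in> carrier G" using True inG by auto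
      have eq: "int (m * n) mod int d = (int m mod int d) \<otimes>\<^bsub>G\<^esub> (int n mod int d)"
        unfolding mul of_nat_mult by (rule mod_mult_eq[symmetric])
      have "chi (m * n) = psi (int (m * n) mod int d)" using True unfolding chi_def by simp
      also have "\<dots> = psi ((int m mod int d) \<otimes>\<^bsub>G\<^esub> (int n mod int d))" by (simp only: eq)
      also have "\<dots> = psi (int m mod int d) * psi (int n mod int d)" using psi2 um by blast
      also have "\<dots> = chi m * chi n" using True unfolding chi_def by simp
      finally show ?thesis .
    next
      case False
      thus ?thesis unfolding chi_def by auto
    qed
  qed
  moreover have "chi x \<noteq> 1" unfolding chi_def using x psi3 by simp
  ultimately show ?thesis unfolding dchars_def by (intro bexI[of _ chi]) auto
qed

definition chi0 :: "nat \<Rightarrow> nat \<Rightarrow> complex" where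
  "chi0 d n = (if coprime n d then 1 else 0)"

lemma coprime_add_self: "coprime (n + d) d \<longleftrightarrow> coprime (n::nat) d"
  by (simp only: coprime_iff_gcd_eq_1 gcd_add1)

lemma chi0_in: "chi0 d \<in> dchars d"
  unfolding dchars_def dirichlet_char_def chi0_def by (auto simp: coprime_add_self)

lemma dchars_mult_closed:
  assumes "c1 \<in> dchars d" "c2 \<in> dchars d"
  shows "(\<lambda>n. c1 n * c2 n) \<in> dchars d"
  using assms unfolding dchars_def dirichlet_char_def by (auto simp: algebra_simps)

lemma dchars_cnj_closed:
  assumes "c \<in> dchars d"
  shows "(\<lambda>n. cnj (c n)) \<in> dchars d"
  using assms unfolding dchars_def dirichlet_char_def by auto

lemma dchars_shift:
  assumes d: "d > 0" and psi: "psi \<in> dchars d"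
  shows "(\<Sum>chi\<in>dchars d. f chi) = (\<Sum>chi\<in>dchars d. f (\<lambda>n. psi n * chi n))"
proof -
  have psi': "dirichlet_char d psi" using psi unfolding dchars_def by simp
  have inv: "(\<lambda>n. a n * (b n * c n)) = c" if "c \<in> dchars d" and ab: "\<And>n. coprime n d \<Longrightarrow> a n * b n = 1"
    for a b c
  proof
    fix n
    show "a n * (b n * c n) = c n"
    proof (cases "coprime n d")
      case True thus ?thesis using ab[OF True] by (simp add: mult.assoc[symmetric])
    next
      case False thus ?thesis using that dchar_zero unfolding dchars_def by auto
    qed
  qed
  have c1: "psi n * cnj (psi n) = 1" "cnj (psi n) * psi n = 1" if "coprime n d" for n
    using dchar_cnj_mult[OF psi' that d] by (simp_all add: mult.commute)
  have i1: "(\<lambda>n. psi n * (cnj (psi n) * a n)) = a" if "a \<in> dchars d" for a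
    by (rule inv[OF that c1(1)])
  have i2: "(\<lambda>n. cnj (psi n) * (psi n * a n)) = a" if "a \<in> dchars d" for a
    by (rule inv[OF that c1(2)])
  show ?thesis
    by (rule sum.reindex_bij_witness[of _ "\<lambda>chi n. psi n * chi n" "\<lambda>chi n. cnj (psi n) * chi n"])
       (use psi in \<open>auto simp: i1 i2 intro!: dchars_mult_closed dchars_cnj_closed\<close>)
qed

lemma sum_dchars:
  assumes d: "d > 0"
  shows "(\<Sum>chi\<in>dchars d. chi x) =
     (if coprime x d \<and> [x = 1] (mod d) then of_nat (card (dchars d)) else 0)"
proof (cases "coprime x d")
  case False
  thus ?thesis using dchar_zero unfolding dchars_def by (auto intro!: sum.neutral)
next
  case cop: True
  show ?thesis
  proof (cases "[x = 1] (mod d)")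
    case True
    hence "chi x = 1" if "chi \<in> dchars d" for chi
      using that dchar_cong dchar_one unfolding dchars_def by (metis mem_Collect_eq)
    hence "(\<Sum>chi\<in>dchars d. chi x) = (\<Sum>chi\<in>dchars d. 1)" by (intro sum.cong) auto
    thus ?thesis using True cop by simp
  next
    case False
    have "d \<noteq> 1" using False by (auto simp: cong_def)
    hence d1: "d > 1" using d by simp
    have "x mod d \<noteq> 1" using False d1 by (simp add: cong_def)
    then obtain psi where psi: "psi \<in> dchars d" "psi x \<noteq> 1"
      using dchars_exists[OF d1 cop] by blast
    have "(\<Sum>chi\<in>dchars d. chi x) = (\<Sum>chi\<in>dchars d. psi x * chi x)"
      using dchars_shift[OF d psi(1), of "\<lambda>chi. chi x"] by simp
    also have "\<dots> = psi x * (\<Sum>chi\<in>dchars d. chi x)" by (simp add: sum_distrib_left)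
    finally have "(1 - psi x) * (\<Sum>chi\<in>dchars d. chi x) = 0" by (simp add: algebra_simps)
    thus ?thesis using psi(2) False by simp
  qed
qed

lemma card_coprime_less:
  assumes "d > 0"
  shows "card {n. n < d \<and> coprime n d} = totient d"
proof (cases "d = 1")
  case True
  hence "{n. n < d \<and> coprime n d} = {0}" by auto
  thus ?thesis using True by simp
next
  case False
  have "{n. n < d \<and> coprime n d} = totatives d"
  proof (intro equalityI subsetI)
    fix n assume "n \<in> {n. n < d \<and> coprime n d}"
    hence n: "n < d" "coprime n d" by auto
    have "n \<noteq> 0"
    proof
      assume "n = 0"
      hence "coprime 0 d" using n(2) by simp
      thus False using False by simp
    qed
    thus "n \<in> totatives d" using n by (simp add: in_totatives_iff)
  next
    fix n assume "n \<in> totatives d"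
    hence n: "0 < n" "n \<le> d" "coprime n d" by (simp_all add: in_totatives_iff)
    have "n \<noteq> d" using n(3) False by auto
    thus "n \<in> {n. n < d \<and> coprime n d}" using n by simp
  qed
  thus ?thesis by (simp add: totient_def)
qed

lemma sum_dchar_residues:
  assumes d: "d > 0" and chi: "chi \<in> dchars d"
  shows "(\<Sum>n<d. chi n) = (if chi = chi0 d then of_nat (totient d) else 0)"
proof (cases "chi = chi0 d")
  case True
  have "(\<Sum>n<d. chi n) = (\<Sum>n\<in>{n. n < d \<and> coprime n d}. 1)"
    unfolding True chi0_def by (subst sum.inter_filter[symmetric]) (auto intro!: sum.cong)
  also have "\<dots> = of_nat (totient d)" using card_coprime_less[OF d] by simp
  finally show ?thesis using True by simp
next
  case False
  have chi': "dirichlet_char d chi" using chi unfolding dchars_def by simp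
  obtain y where y: "chi y \<noteq> chi0 d y" using False by blast
  have ycop: "coprime y d" using y dchar_zero[OF chi'] unfolding chi0_def by (cases "coprime y d") auto
  hence y1: "chi y \<noteq> 1" using y unfolding chi0_def by simp
  define h where "h n = (y * n) mod d" for n
  have inj: "inj_on h {..<d}"
  proof (rule inj_onI)
    fix a b assume ab: "a \<in> {..<d}" "b \<in> {..<d}" "h a = h b"
    hence "[y * a = y * b] (mod d)" unfolding h_def cong_def by simp
    hence "[a = b] (mod d)" using cong_mult_lcancel_nat[OF ycop] by simp
    thus "a = b" using ab by (simp add: cong_def)
  qed
  have img: "h ` {..<d} = {..<d}"
    by (rule endo_inj_surj) (use inj d in \<open>auto simp: h_def\<close>)
  have "(\<Sum>n<d. chi n) = (\<Sum>n\<in>h ` {..<d}. chi n)" using img by simp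
  also have "\<dots> = (\<Sum>n<d. chi (h n))" using sum.reindex[OF inj] by simp
  also have "\<dots> = (\<Sum>n<d. chi y * chi n)"
    unfolding h_def by (intro sum.cong refl) (simp add: dchar_mod[OF chi', symmetric] dchar_mult[OF chi'])
  also have "\<dots> = chi y * (\<Sum>n<d. chi n)" by (simp add: sum_distrib_left)
  finally have "(1 - chi y) * (\<Sum>n<d. chi n) = 0" by (simp add: algebra_simps)
  thus ?thesis using y1 False by simp
qed

lemma card_dchars:
  assumes d: "d > 0"
  shows "card (dchars d) = totient d"
proof -
  have fin: "finite (dchars d)" by (rule dchars_finite[OF d])
  have "(\<Sum>x<d. \<Sum>chi\<in>dchars d. chi x) = (\<Sum>x<d. if x = 1 mod d then of_nat (card (dchars d)) else 0)"
  proof (intro sum.cong refl)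
    fix x assume x: "x \<in> {..<d}"
    have "(coprime x d \<and> [x = 1] (mod d)) \<longleftrightarrow> x = 1 mod d"
    proof
      assume "coprime x d \<and> [x = 1] (mod d)"
      thus "x = 1 mod d" using x by (simp add: cong_def)
    next
      assume "x = 1 mod d"
      thus "coprime x d \<and> [x = 1] (mod d)" using d by (simp add: cong_def)
    qed
    thus "(\<Sum>chi\<in>dchars d. chi x) = (if x = 1 mod d then of_nat (card (dchars d)) else 0)"
      using sum_dchars[OF d, of x] by simp
  qed
  also have "\<dots> = of_nat (card (dchars d))" using d by (simp add: sum.delta)
  finally have 1: "(\<Sum>x<d. \<Sum>chi\<in>dchars d. chi x) = of_nat (card (dchars d))" .
  have "(\<Sum>x<d. \<Sum>chi\<in>dchars d. chi x) = (\<Sum>chi\<in>dchars d. \<Sum>x<d. chi x)" by (rule sum.swap)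
  also have "\<dots> = (\<Sum>chi\<in>dchars d. if chi = chi0 d then of_nat (totient d) else 0)"
    using sum_dchar_residues[OF d] by (intro sum.cong refl) simp
  also have "\<dots> = of_nat (totient d)" using fin chi0_in by (simp add: sum.delta)
  finally have "(of_nat (card (dchars d)) :: complex) = of_nat (totient d)" using 1 by simp
  thus ?thesis by (simp only: of_nat_eq_iff)
qed

lemma dchars_orth:
  assumes d: "d > 0"
  shows "(\<Sum>chi\<in>dchars d. chi b * cnj (chi y)) =
     (if coprime y d \<and> [b = y] (mod d) then of_nat (totient d) else 0)"
proof (cases "coprime y d")
  case False
  thus ?thesis using dchar_zero unfolding dchars_def by (auto intro!: sum.neutral)
next
  case True
  obtain y' where y': "[y * y' = 1] (mod d)" using cong_solve_coprime_nat[OF True] by auto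
  have "chi b * cnj (chi y) = chi (b * y')" if "chi \<in> dchars d" for chi
  proof -
    have c: "dirichlet_char d chi" using that unfolding dchars_def by simp
    have A: "chi y * chi y' = 1" using dchar_cong[OF c y'] dchar_mult[OF c] dchar_one[OF c] by simp
    have B: "chi y * cnj (chi y) = 1" by (rule dchar_cnj_mult[OF c True d])
    have "cnj (chi y) = cnj (chi y) * (chi y * chi y')" using A by simp
    also have "\<dots> = (chi y * cnj (chi y)) * chi y'" by (simp add: mult_ac)
    also have "\<dots> = chi y'" using B by simp
    finally have "cnj (chi y) = chi y'" .
    thus ?thesis by (simp add: dchar_mult[OF c])
  qed
  hence "(\<Sum>chi\<in>dchars d. chi b * cnj (chi y)) = (\<Sum>chi\<in>dchars d. chi (b * y'))" by simp
  also have "\<dots> = (if coprime (b * y') d \<and> [b * y' = 1] (mod d) then of_nat (totient d) else 0)"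
    using sum_dchars[OF d] card_dchars[OF d] by simp
  also have "(coprime (b * y') d \<and> [b * y' = 1] (mod d)) \<longleftrightarrow> [b = y] (mod d)"
  proof
    assume asm: "coprime (b * y') d \<and> [b * y' = 1] (mod d)"
    have h1: "[b * y' * y = 1 * y] (mod d)" using cong_mult[OF conjunct2[OF asm] cong_refl[of y]] .
    have h2: "[b * (y * y') = b * 1] (mod d)" using cong_mult[OF cong_refl[of b] y'] .
    have h1': "[b * y' * y = y] (mod d)" using h1 by simp
    have h2': "[b * y' * y = b] (mod d)" using h2 by (simp add: mult_ac)
    show "[b = y] (mod d)" using cong_trans[OF cong_sym[OF h2'] h1'] .
  next
    assume asm: "[b = y] (mod d)"
    have "[b * y' = y * y'] (mod d)" using cong_mult[OF asm cong_refl[of y']] .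
    hence b: "[b * y' = 1] (mod d)" using cong_trans y' by blast
    have "coprime (b * y') d" using cong_imp_coprime[OF cong_sym[OF b]] by simp
    thus "coprime (b * y') d \<and> [b * y' = 1] (mod d)" using b by simp
  qed
  finally show ?thesis using True by simp
qed

definition E :: "nat \<Rightarrow> nat \<Rightarrow> complex" where
  "E d N = exp (2 * of_real pi * \<i> * of_nat N / of_nat d)"

lemma E_mod:
  assumes "d > 0"
  shows "E d N = E d (N mod d)"
proof -
  define q r where "q = N div d" and "r = N mod d"
  have N: "(of_nat N :: complex) = of_nat r + of_nat d * of_nat q"
    unfolding q_def r_def by (metis of_nat_add of_nat_mult mod_mult_div_eq)
  have "2 * of_real pi * \<i> * of_nat N / of_nat d =
        2 * of_real pi * \<i> * of_nat r / of_nat d + (2 * of_nat q * of_real pi) * \<i>"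
    unfolding N using assms by (simp add: field_simps)
  hence "E d N = E d r * exp ((2 * of_nat q * of_real pi) * \<i>)"
    unfolding E_def by (simp add: exp_add)
  also have "exp ((2 * of_nat q * of_real pi) * \<i>) = exp (of_nat q * (2 * of_real pi * \<i>))"
    by (simp add: mult_ac)
  also have "\<dots> = 1" by (simp only: exp_of_nat_mult exp_two_pi_i power_one)
  finally show ?thesis unfolding r_def by simp
qed

lemma char_gauss_sum:
  assumes d: "d > 0" and a: "coprime a d"
  shows "(\<Sum>chi\<in>dchars d. chi a * gauss_sum d (\<lambda>n. cnj (chi n)) * chi n) =
         (if coprime n d then of_nat (totient d) * E d (a * n) else 0)"
proof -
  have "(\<Sum>chi\<in>dchars d. chi a * gauss_sum d (\<lambda>n. cnj (chi n)) * chi n) =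
        (\<Sum>chi\<in>dchars d. \<Sum>\<nu><d. E d \<nu> * (chi (a * n) * cnj (chi \<nu>)))"
  proof (intro sum.cong refl)
    fix chi assume "chi \<in> dchars d"
    hence c: "dirichlet_char d chi" unfolding dchars_def by simp
    show "chi a * gauss_sum d (\<lambda>n. cnj (chi n)) * chi n =
          (\<Sum>\<nu><d. E d \<nu> * (chi (a * n) * cnj (chi \<nu>)))"
      unfolding gauss_sum_def E_def dchar_mult[OF c]
      by (simp add: sum_distrib_left sum_distrib_right mult_ac)
  qed
  also have "\<dots> = (\<Sum>\<nu><d. E d \<nu> * (\<Sum>chi\<in>dchars d. chi (a * n) * cnj (chi \<nu>)))"
    by (subst sum.swap) (simp add: sum_distrib_left)
  also have "\<dots> = (\<Sum>\<nu><d. if \<nu> = (a * n) mod d then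
                    (if coprime \<nu> d then of_nat (totient d) * E d \<nu> else 0) else 0)"
  proof (intro sum.cong refl)
    fix \<nu> assume "\<nu> \<in> {..<d}"
    hence "[a * n = \<nu>] (mod d) \<longleftrightarrow> \<nu> = (a * n) mod d" by (auto simp: cong_def)
    thus "E d \<nu> * (\<Sum>chi\<in>dchars d. chi (a * n) * cnj (chi \<nu>)) =
      (if \<nu> = (a * n) mod d then (if coprime \<nu> d then of_nat (totient d) * E d \<nu> else 0) else 0)"
      using dchars_orth[OF d, of "a * n" \<nu>] by (auto simp: mult.commute)
  qed
  also have "\<dots> = (if coprime ((a * n) mod d) d then of_nat (totient d) * E d ((a * n) mod d) else 0)"
    using d by (simp add: sum.delta)
  also have "\<dots> = (if coprime n d then of_nat (totient d) * E d (a * n) else 0)"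
    using d a by (simp add: E_mod[OF d, of "a * n", symmetric])
  finally show ?thesis .
qed

lemma norm_nat_powr: "norm (of_nat n powr s :: complex) = real n powr Re s"
  using norm_powr_real_powr[of "of_nat n" s] by simp

lemma summable_bounded_dirichlet:
  assumes s: "Re s > 1" and g: "\<And>n. norm (g n) \<le> B"
  shows "summable (\<lambda>n. norm (g n / of_nat n powr s))"
proof (rule summable_comparison_test')
  show "summable (\<lambda>n. B * real n powr (- Re s))"
    using summable_real_powr_iff[of "- Re s"] s by (intro summable_mult) simp
  fix n :: nat assume "n \<ge> 1"
  have "norm (norm (g n / of_nat n powr s)) = norm (g n) / real n powr Re s"
    by (simp add: norm_divide norm_nat_powr)
  also have "\<dots> \<le> B / real n powr Re s"
    using g by (intro divide_right_mono) auto
  also have "\<dots> = B * real n powr (- Re s)" by (simp add: powr_minus_divide)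
  finally show "norm (norm (g n / of_nat n powr s)) \<le> B * real n powr (- Re s)" .
qed

lemma dirichlet_L_eq:
  assumes s: "Re s > 1" and d: "d > 0" and chi: "chi \<in> dchars d"
  shows "summable (\<lambda>n. chi n / of_nat n powr s)"
    and "dirichlet_L s chi = (\<Sum>n. chi n / of_nat n powr s)"
proof -
  have c: "dirichlet_char d chi" using chi unfolding dchars_def by simp
  have "norm (chi n) \<le> 1" for n
    using dchar_norm[OF c _ d, of n] dchar_zero[OF c, of n] by (cases "coprime n d") auto
  hence "summable (\<lambda>n. norm (chi n / of_nat n powr s))"
    by (rule summable_bounded_dirichlet[OF s])
  thus sm: "summable (\<lambda>n. chi n / of_nat n powr s)" by (rule summable_norm_cancel)
  have "(\<lambda>n. chi (Suc n) / of_nat (Suc n) powr s) sums (\<Sum>n. chi n / of_nat n powr s)"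
    using sums_Suc_iff[of "\<lambda>n. chi n / of_nat n powr s"] sm by (simp add: summable_sums)
  thus "dirichlet_L s chi = (\<Sum>n. chi n / of_nat n powr s)"
    unfolding dirichlet_L_def by (simp add: sums_iff)
qed

lemma rhs_term:
  assumes s: "Re s > 1" and d: "d > 0" and a: "coprime a d"
  shows "of_nat d powr s / of_nat (totient d) *
        (\<Sum>chi\<in>dchars d. chi a * gauss_sum d (\<lambda>n. cnj (chi n)) * dirichlet_L s chi) =
      (\<Sum>n. of_nat d powr s * (if coprime n d then E d (a * n) else 0) / of_nat n powr s)"
proof -
  define c where "c chi = chi a * gauss_sum d (\<lambda>n. cnj (chi n))" for chi :: "nat \<Rightarrow> complex"
  have "(\<Sum>chi\<in>dchars d. chi a * gauss_sum d (\<lambda>n. cnj (chi n)) * dirichlet_L s chi) =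
        (\<Sum>chi\<in>dchars d. \<Sum>n. c chi * (chi n / of_nat n powr s))"
  proof (intro sum.cong refl)
    fix chi assume chi: "chi \<in> dchars d"
    have "chi a * gauss_sum d (\<lambda>n. cnj (chi n)) * dirichlet_L s chi =
          c chi * (\<Sum>n. chi n / of_nat n powr s)"
      unfolding c_def dirichlet_L_eq(2)[OF s d chi] ..
    also have "\<dots> = (\<Sum>n. c chi * (chi n / of_nat n powr s))"
      by (rule suminf_mult[symmetric, OF dirichlet_L_eq(1)[OF s d chi]])
    finally show "chi a * gauss_sum d (\<lambda>n. cnj (chi n)) * dirichlet_L s chi =
          (\<Sum>n. c chi * (chi n / of_nat n powr s))" .
  qed
  also have "\<dots> = (\<Sum>n. \<Sum>chi\<in>dchars d. c chi * (chi n / of_nat n powr s))"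
    by (rule suminf_sum[symmetric]) (intro summable_mult dirichlet_L_eq[OF s d])
  also have "\<dots> = (\<Sum>n. of_nat (totient d) * ((if coprime n d then E d (a * n) else 0) / of_nat n powr s))"
  proof (intro suminf_cong)
    fix n
    have "(\<Sum>chi\<in>dchars d. c chi * (chi n / of_nat n powr s)) =
          (\<Sum>chi\<in>dchars d. c chi * chi n) / of_nat n powr s"
      by (simp add: sum_divide_distrib)
    also have "\<dots> = (if coprime n d then of_nat (totient d) * E d (a * n) else 0) / of_nat n powr s"
      using char_gauss_sum[OF d a, of n] unfolding c_def by simp
    finally show "(\<Sum>chi\<in>dchars d. c chi * (chi n / of_nat n powr s)) =
        of_nat (totient d) * ((if coprime n d then E d (a * n) else 0) / of_nat n powr s)" by simp
  qed
  also have "\<dots> = of_nat (totient d) * (\<Sum>n. (if coprime n d then E d (a * n) else 0) / of_nat n powr s)"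
  proof (rule suminf_mult)
    have nb: "norm (if coprime n d then E d (a * n) else 0) \<le> 1" for n
      by (simp add: E_def norm_exp_eq_Re)
    show "summable (\<lambda>n. (if coprime n d then E d (a * n) else 0) / of_nat n powr s)"
      by (rule summable_norm_cancel[OF summable_bounded_dirichlet[OF s nb]])
  qed
  finally have *: "(\<Sum>chi\<in>dchars d. chi a * gauss_sum d (\<lambda>n. cnj (chi n)) * dirichlet_L s chi) =
      of_nat (totient d) * (\<Sum>n. (if coprime n d then E d (a * n) else 0) / of_nat n powr s)" .
  have tp: "(of_nat (totient d) :: complex) \<noteq> 0" using d by simp
  have "of_nat d powr s / of_nat (totient d) *
        (\<Sum>chi\<in>dchars d. chi a * gauss_sum d (\<lambda>n. cnj (chi n)) * dirichlet_L s chi) =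
        of_nat d powr s * (\<Sum>n. (if coprime n d then E d (a * n) else 0) / of_nat n powr s)"
    unfolding * using tp by simp
  also have "\<dots> = (\<Sum>n. of_nat d powr s * ((if coprime n d then E d (a * n) else 0) / of_nat n powr s))"
  proof (rule suminf_mult[symmetric])
    have nb: "norm (if coprime n d then E d (a * n) else 0) \<le> 1" for n
      by (simp add: E_def norm_exp_eq_Re)
    show "summable (\<lambda>n. (if coprime n d then E d (a * n) else 0) / of_nat n powr s)"
      by (rule summable_norm_cancel[OF summable_bounded_dirichlet[OF s nb]])
  qed
  finally show ?thesis by simp
qed

lemma powr_nat_mult: "(of_nat (x * y) :: complex) powr s = of_nat x powr s * of_nat y powr s"
  by (simp add: powr_times_real)

lemma powr_nat_nz: "x > 0 \<Longrightarrow> (of_nat x :: complex) powr s \<noteq> 0"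
  by (simp add: powr_def)

lemma piece_eq:
  assumes m: "m = g * d" and g: "g > 0"
  shows "of_nat m powr s * (E m (a * (g * k)) / of_nat (g * k) powr s) =
         of_nat d powr s * E d (a * k) / of_nat k powr s"
proof (cases "k = 0")
  case True thus ?thesis by simp
next
  case False
  have "E m (a * (g * k)) = E d (a * k)"
    unfolding E_def m using g by (simp add: field_simps)
  moreover have "of_nat m powr s = of_nat g powr s * of_nat d powr s" unfolding m by (rule powr_nat_mult)
  moreover have "of_nat (g * k) powr s = of_nat g powr s * of_nat k powr s" by (rule powr_nat_mult)
  moreover have "(of_nat g :: complex) powr s \<noteq> 0" "(of_nat k :: complex) powr s \<noteq> 0"
    using g False by (simp_all add: powr_nat_nz)
  ultimately show ?thesis by (simp add: field_simps)
qed

lemma lhs_eq: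
  assumes s: "Re s > 1" and m: "m > 0"
  shows "of_nat m powr s * periodic_zeta s (real a / real m) =
    (\<Sum>d\<in>{d. d dvd m}. \<Sum>n. of_nat d powr s * (if coprime n d then E d (a * n) else 0) / of_nat n powr s)"
proof -
  define F where "F n = E m (a * n) / of_nat n powr s" for n
  have Fb: "norm (E m (a * n)) \<le> 1" for n by (simp add: E_def norm_exp_eq_Re)
  have Fs: "summable (\<lambda>n. norm (F n))" unfolding F_def
    by (rule summable_bounded_dirichlet[OF s Fb])
  have pz: "periodic_zeta s (real a / real m) = (\<Sum>n. F n)"
  proof -
    have ex: "exp (2 * of_real pi * \<i> * of_real (real a / real m) * of_nat (Suc n)) = E m (a * Suc n)" for n
      unfolding E_def by (simp add: of_real_divide field_simps)
    have F0: "F 0 = 0" unfolding F_def by simp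
    have "F sums (\<Sum>n. F n)" using summable_norm_cancel[OF Fs] by (rule summable_sums)
    hence "(\<lambda>n. F (Suc n)) sums (\<Sum>n. F n)" using sums_Suc_iff[of F "\<Sum>n. F n"] F0 by simp
    moreover have "periodic_zeta s (real a / real m) = (\<Sum>n. F (Suc n))"
      unfolding periodic_zeta_def F_def ex ..
    ultimately show ?thesis by (simp add: sums_iff)
  qed
  define G where "G n = of_nat m powr s * F n" for n
  have Gs: "summable (\<lambda>n. norm (G n))"
    unfolding G_def norm_mult by (intro summable_mult Fs)
  have "G sums (of_nat m powr s * (\<Sum>n. F n))"
    unfolding G_def by (intro sums_mult summable_sums summable_norm_cancel[OF Fs])
  hence Ghs: "(G has_sum (of_nat m powr s * periodic_zeta s (real a / real m))) UNIV"
    unfolding pz by (rule norm_summable_imp_has_sum[OF Gs])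
  have Gsum: "G summable_on A" for A
    using norm_summable_imp_summable_on[OF Gs] by (rule summable_on_subset_banach) simp
  define B where "B d = {n. gcd n m = m div d}" for d
  have divdiv: "m div (m div d) = d" if dm: "d dvd m" for d
  proof -
    obtain k where k: "m = d * k" using dm by (auto elim: dvdE)
    hence "k > 0" "d > 0" using m by auto
    thus ?thesis using k by simp
  qed
  have cover: "(\<Union>d\<in>{d. d dvd m}. B d) = UNIV"
  proof (safe)
    fix n :: nat
    have "m div gcd n m dvd m" by (metis dvd_div_mult_self dvd_triv_left gcd_dvd2)
    moreover have "gcd n m = m div (m div gcd n m)" using divdiv[of "gcd n m"] by simp
    ultimately show "n \<in> (\<Union>d\<in>{d. d dvd m}. B d)" unfolding B_def by blast
  qed auto
  have disj: "B d \<inter> B d' = {}" if dd: "d \<in> {d. d dvd m}" "d' \<in> {d. d dvd m}" "d \<noteq> d'" for d d'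
  proof -
    have "m div d \<noteq> m div d'"
    proof
      assume "m div d = m div d'"
      hence "m div (m div d) = m div (m div d')" by simp
      thus False using divdiv[of d] divdiv[of d'] dd by simp
    qed
    thus ?thesis unfolding B_def by auto
  qed
  have "(G has_sum (\<Sum>d\<in>{d. d dvd m}. infsum G (B d))) (\<Union>d\<in>{d. d dvd m}. B d)"
    by (rule sum_has_sum) (use m Gsum disj in \<open>auto intro: has_sum_infsum\<close>)
  hence "of_nat m powr s * periodic_zeta s (real a / real m) = (\<Sum>d\<in>{d. d dvd m}. infsum G (B d))"
    using Ghs cover has_sum_unique by metis
  also have "\<dots> = (\<Sum>d\<in>{d. d dvd m}. \<Sum>n. of_nat d powr s * (if coprime n d then E d (a * n) else 0) / of_nat n powr s)"
  proof (intro sum.cong refl)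
    fix d assume "d \<in> {d. d dvd m}"
    hence dm: "d dvd m" by simp
    define g where "g = m div d"
    have mgd: "m = g * d" unfolding g_def using dm by simp
    have g0: "g > 0" "d > 0" using mgd m by auto
    define h where "h k = g * k" for k
    have inj: "inj_on h {k. coprime k d}" unfolding h_def using g0 by (intro inj_onI) simp
    have img: "B d = h ` {k. coprime k d}"
    proof
      show "h ` {k. coprime k d} \<subseteq> B d"
      proof
        fix n assume "n \<in> h ` {k. coprime k d}"
        then obtain k where k: "coprime k d" "n = g * k" unfolding h_def by blast
        have "gcd k d = 1" using k(1) by (simp only: coprime_iff_gcd_eq_1)
        hence "gcd n m = g" unfolding k(2) mgd by (simp add: gcd_mult_left)
        thus "n \<in> B d" unfolding B_def g_def by simp
      qed
    next
      show "B d \<subseteq> h ` {k. coprime k d}"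
      proof
        fix n assume "n \<in> B d"
        hence n: "gcd n m = g" unfolding B_def g_def by simp
        then obtain k where k: "n = g * k" by (metis gcd_dvd1 dvdE)
        have "g * gcd k d = g * 1" using n unfolding k mgd by (simp add: gcd_mult_left)
        hence "gcd k d = 1" using g0 by simp
        hence "coprime k d" by (simp only: coprime_iff_gcd_eq_1)
        thus "n \<in> h ` {k. coprime k d}" unfolding h_def k by blast
      qed
    qed
    define H where "H k = of_nat d powr s * (if coprime k d then E d (a * k) else 0) / of_nat k powr s" for k
    have Hb: "norm (of_nat d powr s * (if coprime k d then E d (a * k) else 0)) \<le> norm (of_nat d powr s :: complex)" for k
      by (simp add: E_def norm_exp_eq_Re norm_mult)
    have Hs: "summable (\<lambda>k. norm (H k))" unfolding H_def
      by (rule summable_bounded_dirichlet[OF s Hb])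
    have "infsum G (B d) = infsum (G \<circ> h) {k. coprime k d}" unfolding img by (rule infsum_reindex[OF inj])
    also have "\<dots> = infsum H UNIV"
    proof (rule infsum_cong_neutral)
      have pe: "G (h k) = of_nat d powr s * E d (a * k) / of_nat k powr s" for k
        unfolding G_def F_def h_def by (rule piece_eq[OF mgd g0(1)])
      show "\<And>x. x \<in> UNIV - {k. coprime k d} \<Longrightarrow> H x = 0" by (simp add: H_def)
      show "\<And>x. x \<in> {k. coprime k d} - UNIV \<Longrightarrow> (G \<circ> h) x = 0" by simp
      show "\<And>x. x \<in> {k. coprime k d} \<inter> UNIV \<Longrightarrow> (G \<circ> h) x = H x" by (simp add: pe H_def)
    qed
    also have "\<dots> = (\<Sum>k. H k)"
      by (rule infsumI, rule norm_summable_imp_has_sum[OF Hs])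
         (rule summable_sums, rule summable_norm_cancel[OF Hs])
    finally show "infsum G (B d) = (\<Sum>n. of_nat d powr s * (if coprime n d then E d (a * n) else 0) / of_nat n powr s)"
      unfolding H_def .
  qed
  finally show ?thesis .
qed

theorem proposition1:
  fixes a m :: nat and s :: complex
  assumes "a > 0" and "m > 0" and "coprime a m" and "Re s > 1"
  shows "of_nat m powr s * periodic_zeta s (real a / real m) =
    (\<Sum>d\<in>{d. d dvd m}. of_nat d powr s / of_nat (totient d) *
        (\<Sum>chi\<in>dchars d. chi a * gauss_sum d (\<lambda>n. cnj (chi n)) * dirichlet_L s chi))"
proof -
  have "of_nat m powr s * periodic_zeta s (real a / real m) =
    (\<Sum>d\<in>{d. d dvd m}. \<Sum>n. of_nat d powr s * (if coprime n d then E d (a * n) else 0) / of_nat n powr s)"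
    by (rule lhs_eq[OF assms(4) assms(2)])
  also have "\<dots> = (\<Sum>d\<in>{d. d dvd m}. of_nat d powr s / of_nat (totient d) *
        (\<Sum>chi\<in>dchars d. chi a * gauss_sum d (\<lambda>n. cnj (chi n)) * dirichlet_L s chi))"
  proof (rule sum.cong[OF refl])
    fix d assume "d \<in> {d. d dvd m}"
    hence dm: "d dvd m" by simp
    hence d: "d > 0" using assms(2) by (auto intro: Nat.gr0I)
    have ad: "coprime a d" using coprime_divisors[OF dvd_refl dm assms(3)] .
    show "(\<Sum>n. of_nat d powr s * (if coprime n d then E d (a * n) else 0) / of_nat n powr s) =
      of_nat d powr s / of_nat (totient d) *
        (\<Sum>chi\<in>dchars d. chi a * gauss_sum d (\<lambda>n. cnj (chi n)) * dirichlet_L s chi)"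
      by (rule rhs_term[OF assms(4) d ad, symmetric])
  qed
  finally show ?thesis .
qed

end
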